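(* Let $\mathcal{S}$ be the set of real numbers $c$ for which there exists a hereditary property of ordered graphs $\mathcal{P}$ with $\lim_{n \to \infty} |\mathcal{P}_n|^{1/n} = c$. Then for every integer $n \geqslant 2$ we have $n \in A^{n-1}(\mathcal{S})$, i.e. $n$ is a degree $n-1$ accumulation point from below of $\mathcal{S}$.
   Context: A hereditary property of ordered graphs is a collection of ordered graphs (graphs on $[n]$ with the natural order) closed under order-preserving isomorphism and under taking induced ordered subgraphs; $\mathcal{P}_n$ denotes its members with vertex set $[n]$. For $S\subset\mathbb{R}$, a point $c\in\mathbb{R}$ is an accumulation point from below of $S$ if for every $\varepsilon>0$, $S\cap(c-\varepsilon,c)\neq\emptyset$. $A^1(S)$ denotes the set of accumulation points from below of $S$, and $A^{m+1}(S)=A^1(A^m(S))$ for $m\in\mathbb{N}$. *)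

theory Defs
  imports Complex_Main
begin

text \<open>An ordered graph on [n] = {1..n} (natural order) is a pair (n, E) where E is a
set of 2-element subsets of {1..n}.\<close>

type_synonym ograph = "nat \<times> nat set set"

definition is_ograph :: "ograph \<Rightarrow> bool" where
  "is_ograph G \<longleftrightarrow>
     snd G \<subseteq> {e. \<exists>i j. i \<in> {1..fst G} \<and> j \<in> {1..fst G} \<and> i \<noteq> j \<and> e = {i, j}}"

text \<open>Induced ordered subgraph on a vertex set S, relabelled to [card S] by the unique
order-preserving bijection {1..card S} -> S.\<close>

definition induced_osub :: "ograph \<Rightarrow> nat set \<Rightarrow> ograph" where
  "induced_osub G S =
     (let f = (\<lambda>i. sorted_list_of_set S ! (i - 1)) in
      (card S, {e. \<exists>i j. i \<in> {1..card S} \<and> j \<in> {1..card S} \<and> i \<noteq> j \<and>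
                       e = {i, j} \<and> {f i, f j} \<in> snd G}))"

text \<open>Hereditary property: a collection of ordered graphs closed under taking induced
ordered subgraphs (closure under order-preserving isomorphism is automatic, since
graphs are normalised to vertex set [n] with the natural order).\<close>

definition hereditary :: "ograph set \<Rightarrow> bool" where
  "hereditary P \<longleftrightarrow>
     (\<forall>G\<in>P. is_ograph G) \<and>
     (\<forall>G\<in>P. \<forall>S. S \<subseteq> {1..fst G} \<longrightarrow> induced_osub G S \<in> P)"

definition level :: "ograph set \<Rightarrow> nat \<Rightarrow> nat set set set" where
  "level P n = {E. (n, E) \<in> P}"

definition growth_constants :: "real set" where
  "growth_constants = {c. \<exists>P. hereditary P \<and>
      (\<lambda>n. real (card (level P n)) powr (1 / real n)) \<longlonglongrightarrow> c}"

definition acc_below :: "real set \<Rightarrow> real set" where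
  "acc_below S = {c. \<forall>\<epsilon>>0. S \<inter> {c - \<epsilon><..<c} \<noteq> {}}"

end

theory Submission
  imports Defs
begin


definition ovalid :: "nat \<Rightarrow> nat list \<Rightarrow> bool" where
  "ovalid q r \<longleftrightarrow> (\<forall>t<length r. r!t \<le> t \<and> r!t \<le> q)"

definition ocut :: "nat list \<Rightarrow> nat \<Rightarrow> bool" where
  "ocut r c \<longleftrightarrow> (\<forall>t. c \<le> t \<longrightarrow> t < length r \<longrightarrow> r!t + c \<le> t)"

definition ocutfree :: "nat list \<Rightarrow> nat \<Rightarrow> nat \<Rightarrow> bool" where
  "ocutfree r a b \<longleftrightarrow> (\<forall>c. a < c \<longrightarrow> c < b \<longrightarrow> \<not> ocut r c)"

definition ostat :: "nat list \<Rightarrow> nat \<Rightarrow> nat \<Rightarrow> nat \<Rightarrow> nat" where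
  "ostat r d a b = card {t. a \<le> t \<and> t < b \<and> d \<le> r!t}"

definition ogood :: "nat \<Rightarrow> nat \<Rightarrow> (nat \<Rightarrow> nat) \<Rightarrow> nat list \<Rightarrow> bool" where
  "ogood q j K r \<longleftrightarrow> (\<forall>a b. a < b \<longrightarrow> b \<le> length r \<longrightarrow> ocutfree r a b \<longrightarrow>
      (\<forall>d. j \<le> d \<longrightarrow> d \<le> q \<longrightarrow> ostat r d a b \<le> K d))"

definition oirred :: "nat list \<Rightarrow> bool" where
  "oirred r \<longleftrightarrow> r \<noteq> [] \<and> (\<forall>c. 0 < c \<longrightarrow> c < length r \<longrightarrow> \<not> ocut r c)"

definition GS :: "nat \<Rightarrow> nat \<Rightarrow> (nat \<Rightarrow> nat) \<Rightarrow> nat \<Rightarrow> nat list set" where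
  "GS q j K m = {r. length r = m \<and> ovalid q r \<and> ogood q j K r}"

definition BS :: "nat \<Rightarrow> nat \<Rightarrow> (nat \<Rightarrow> nat) \<Rightarrow> nat \<Rightarrow> nat list set" where
  "BS q j K l = {r. length r = l \<and> ovalid q r \<and> oirred r \<and> ogood q j K r}"

lemma ovalid_append:
  assumes "ovalid q B" "ovalid q r"
  shows "ovalid q (B @ r)"
  using assms unfolding ovalid_def
  by (auto simp: nth_append) (metis add_diff_inverse_nat diff_less_mono le_add2 le_trans not_less nat_add_left_cancel_less)+

lemma ocut_append_len:
  assumes "ovalid q r"
  shows "ocut (B @ r) (length B)"
  unfolding ocut_def
proof (intro allI impI)
  fix t assume t: "length B \<le> t" "t < length (B @ r)"
  then have "r!(t - length B) \<le> t - length B" using assms unfolding ovalid_def by auto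
  then show "(B @ r)!t + length B \<le> t" using t by (auto simp: nth_append)
qed

lemma ocut_append_left:
  assumes "ovalid q r" "c \<le> length B"
  shows "ocut (B @ r) c \<longleftrightarrow> ocut B c"
proof
  assume h: "ocut (B @ r) c"
  show "ocut B c" unfolding ocut_def
  proof (intro allI impI)
    fix t assume "c \<le> t" "t < length B"
    with h show "B!t + c \<le> t" unfolding ocut_def by (auto simp: nth_append dest: spec[of _ t])
  qed
next
  assume h: "ocut B c"
  show "ocut (B @ r) c" unfolding ocut_def
  proof (intro allI impI)
    fix t assume t: "c \<le> t" "t < length (B @ r)"
    show "(B @ r)!t + c \<le> t"
    proof (cases "t < length B")
      case True then show ?thesis using h t unfolding ocut_def by (auto simp: nth_append)
    next
      case False
      then have "r!(t - length B) \<le> t - length B" using assms(1) t unfolding ovalid_def by auto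
      then show ?thesis using False assms(2) by (auto simp: nth_append)
    qed
  qed
qed

lemma ocut_append_right:
  "ocut (B @ r) (length B + c) \<longleftrightarrow> ocut r c"
proof
  assume h: "ocut (B @ r) (length B + c)"
  show "ocut r c" unfolding ocut_def
  proof (intro allI impI)
    fix t assume "c \<le> t" "t < length r"
    with h[unfolded ocut_def, rule_format, of "length B + t"] show "r!t + c \<le> t"
      by (auto simp: nth_append)
  qed
next
  assume h: "ocut r c"
  show "ocut (B @ r) (length B + c)" unfolding ocut_def
  proof (intro allI impI)
    fix t assume t: "length B + c \<le> t" "t < length (B @ r)"
    with h[unfolded ocut_def, rule_format, of "t - length B"] have "r!(t - length B) + c \<le> t - length B"
      by auto
    then show "(B @ r)!t + (length B + c) \<le> t" using t by (auto simp: nth_append)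
  qed
qed

lemma ostat_append_left:
  assumes "b \<le> length B"
  shows "ostat (B @ r) d a b = ostat B d a b"
  unfolding ostat_def using assms
  by (intro arg_cong[where f=card]) (auto simp: nth_append)

lemma ostat_append_right:
  assumes "length B \<le> a"
  shows "ostat (B @ r) d a b = ostat r d (a - length B) (b - length B)"
proof -
  have "{t. a \<le> t \<and> t < b \<and> d \<le> (B @ r)!t} = (\<lambda>t. t + length B) ` {t. a - length B \<le> t \<and> t < b - length B \<and> d \<le> r!t}"
  proof (rule set_eqI, rule iffI)
    fix x assume "x \<in> {t. a \<le> t \<and> t < b \<and> d \<le> (B @ r)!t}"
    then show "x \<in> (\<lambda>t. t + length B) ` {t. a - length B \<le> t \<and> t < b - length B \<and> d \<le> r!t}"
      using assms by (intro image_eqI[of _ _ "x - length B"]) (auto simp: nth_append)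
  next
    fix x assume "x \<in> (\<lambda>t. t + length B) ` {t. a - length B \<le> t \<and> t < b - length B \<and> d \<le> r!t}"
    then show "x \<in> {t. a \<le> t \<and> t < b \<and> d \<le> (B @ r)!t}"
      using assms by (auto simp: nth_append)
  qed
  then show ?thesis unfolding ostat_def by (simp add: card_image inj_on_def)
qed

lemma ogood_append:
  assumes "ovalid q r"
  shows "ogood q j K (B @ r) \<longleftrightarrow> ogood q j K B \<and> ogood q j K r"
proof safe
  assume h: "ogood q j K (B @ r)"
  show "ogood q j K B" unfolding ogood_def
  proof (intro allI impI)
    fix a b d assume ab: "a < b" "b \<le> length B" "ocutfree B a b" "j \<le> d" "d \<le> q"
    have "ocutfree (B @ r) a b" using ab ocut_append_left[OF assms] unfolding ocutfree_def by auto
    then have "ostat (B @ r) d a b \<le> K d" using h ab unfolding ogood_def by auto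
    then show "ostat B d a b \<le> K d" using ostat_append_left[OF ab(2)] by simp
  qed
  show "ogood q j K r" unfolding ogood_def
  proof (intro allI impI)
    fix a b d assume ab: "a < b" "b \<le> length r" "ocutfree r a b" "j \<le> d" "d \<le> q"
    have "ocutfree (B @ r) (length B + a) (length B + b)"
      unfolding ocutfree_def
    proof (intro allI impI)
      fix c assume c: "length B + a < c" "c < length B + b"
      then have "c = length B + (c - length B)" by simp
      then show "\<not> ocut (B @ r) c" using ocut_append_right[of B r "c - length B"] ab(3) c
        unfolding ocutfree_def by (metis add_less_cancel_left)
    qed
    then have "ostat (B @ r) d (length B + a) (length B + b) \<le> K d" using h ab unfolding ogood_def by auto
    then show "ostat r d a b \<le> K d" using ostat_append_right[of B "length B + a" r d "length B + b"] by simp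
  qed
next
  assume hB: "ogood q j K B" and hr: "ogood q j K r"
  show "ogood q j K (B @ r)" unfolding ogood_def
  proof (intro allI impI)
    fix a b d assume ab: "a < b" "b \<le> length (B @ r)" "ocutfree (B @ r) a b" "j \<le> d" "d \<le> q"
    have "\<not> (a < length B \<and> length B < b)"
      using ab(3) ocut_append_len[OF assms, of B] unfolding ocutfree_def by auto
    then consider "b \<le> length B" | "length B \<le> a" by linarith
    then show "ostat (B @ r) d a b \<le> K d"
    proof cases
      case 1
      have "ocutfree B a b" using ab(3) 1 ocut_append_left[OF assms] unfolding ocutfree_def by auto
      then show ?thesis using hB ab 1 ostat_append_left[OF 1] unfolding ogood_def by auto
    next
      case 2
      have "ocutfree r (a - length B) (b - length B)" unfolding ocutfree_def
      proof (intro allI impI)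
        fix c assume c: "a - length B < c" "c < b - length B"
        then show "\<not> ocut r c" using ab(3) 2 ocut_append_right[of B r c] unfolding ocutfree_def
          by (metis add.commute less_diff_conv less_diff_conv2)
      qed
      then show ?thesis using hr ab 2 ostat_append_right[OF 2] unfolding ogood_def by auto
    qed
  qed
qed


lemma ovalid_take: "ovalid q r \<Longrightarrow> ovalid q (take c r)"
  unfolding ovalid_def by auto

lemma ovalid_drop:
  assumes "ovalid q r" "ocut r c"
  shows "ovalid q (drop c r)"
  unfolding ovalid_def
proof (intro allI impI)
  fix t assume t: "t < length (drop c r)"
  then have "r!(c+t) + c \<le> c + t" "r!(c+t) \<le> q" using assms unfolding ocut_def ovalid_def by auto
  then show "drop c r ! t \<le> t \<and> drop c r ! t \<le> q" using t by auto
qed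

lemma ocut_length: "ocut r (length r)"
  unfolding ocut_def by auto

lemma GS_0: "GS q j K 0 = {[]}"
  unfolding GS_def ovalid_def ogood_def by auto

lemma BS_0: "BS q j K 0 = {}"
  unfolding BS_def oirred_def by auto

lemma decomp:
  assumes r: "r \<in> GS q j K m" and m: "1 \<le> m"
  shows "\<exists>l\<in>{1..m}. take l r \<in> BS q j K l \<and> drop l r \<in> GS q j K (m - l)"
proof -
  have len: "length r = m" and v: "ovalid q r" and g: "ogood q j K r" using r unfolding GS_def by auto
  define l where "l = (LEAST c. 0 < c \<and> ocut r c)"
  have ex: "0 < m \<and> ocut r m" using m ocut_length[of r] len by auto
  have l1: "0 < l \<and> ocut r l" unfolding l_def by (rule LeastI[of _ m]) (use ex in auto)
  have l2: "l \<le> m" unfolding l_def by (rule Least_le) (use ex in auto)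
  have vd: "ovalid q (drop l r)" using ovalid_drop[OF v] l1 by auto
  have vt: "ovalid q (take l r)" using ovalid_take[OF v] .
  have rr: "r = take l r @ drop l r" by simp
  have lt: "length (take l r) = l" using l2 len by auto
  have gg: "ogood q j K (take l r) \<and> ogood q j K (drop l r)"
    using g ogood_append[OF vd, where B="take l r" and j=j and K=K] by simp
  have irr: "oirred (take l r)" unfolding oirred_def
  proof (intro conjI allI impI)
    show "take l r \<noteq> []" using l1 lt by auto
    fix c assume c: "0 < c" "c < length (take l r)"
    show "\<not> ocut (take l r) c"
    proof
      assume "ocut (take l r) c"
      then have "ocut r c" using ocut_append_left[OF vd, of c "take l r"] c rr by auto
      then have "l \<le> c" unfolding l_def using c by (intro Least_le) auto
      then show False using c lt by auto
    qed
  qed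
  show ?thesis
    using l1 l2 lt vt vd gg irr len unfolding BS_def GS_def by (intro bexI[of _ l]) auto
qed

lemma decomp_unique:
  assumes "B1 @ r1 = B2 @ r2" "oirred B1" "oirred B2" "ovalid q r1" "ovalid q r2"
  shows "length B1 = length B2"
proof (rule ccontr)
  assume ne: "length B1 \<noteq> length B2"
  {
    fix B1 r1 B2 r2
    assume e: "B1 @ r1 = B2 @ r2" "oirred B1" "oirred B2" "ovalid q r1" "ovalid q r2"
      and lt: "length B1 < length B2"
    have "ocut (B1 @ r1) (length B1)" by (rule ocut_append_len[OF e(4)])
    then have "ocut (B2 @ r2) (length B1)" using e(1) by simp
    then have "ocut B2 (length B1)" using ocut_append_left[OF e(5)] lt by auto
    moreover have "0 < length B1" using e(2) unfolding oirred_def by auto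
    ultimately have False using e(3) lt unfolding oirred_def by auto
  }
  note * = this
  show False
  proof (cases "length B1 < length B2")
    case True then show ?thesis using *[OF assms] by auto
  next
    case False then show ?thesis using *[OF assms(1)[symmetric] assms(3,2,5,4)] ne by auto
  qed
qed

lemma finite_GS: "finite (GS q j K m)"
proof -
  have "GS q j K m \<subseteq> {xs. set xs \<subseteq> {0..q} \<and> length xs = m}"
    unfolding GS_def ovalid_def by (auto simp: in_set_conv_nth)
  then show ?thesis using finite_lists_length_eq[of "{0..q}" m] finite_subset by blast
qed

lemma finite_BS: "finite (BS q j K m)"
proof -
  have "BS q j K m \<subseteq> GS q j K m" unfolding BS_def GS_def by auto
  then show ?thesis using finite_GS finite_subset by blast
qed

lemma card_GS_rec:
  assumes m: "1 \<le> m"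
  shows "card (GS q j K m) = (\<Sum>l=1..m. card (BS q j K l) * card (GS q j K (m - l)))"
proof -
  let ?A = "\<lambda>l. (\<lambda>(B, r). B @ r) ` (BS q j K l \<times> GS q j K (m - l))"
  have eq: "GS q j K m = (\<Union>l\<in>{1..m}. ?A l)"
  proof
    show "GS q j K m \<subseteq> (\<Union>l\<in>{1..m}. ?A l)"
    proof
      fix r assume r: "r \<in> GS q j K m"
      obtain l where l: "l \<in> {1..m}" "take l r \<in> BS q j K l" "drop l r \<in> GS q j K (m - l)"
        using decomp[OF r m] by blast
      then show "r \<in> (\<Union>l\<in>{1..m}. ?A l)"
        by (intro UN_I[OF l(1)]) (auto intro!: image_eqI[of _ _ "(take l r, drop l r)"])
    qed
  next
    show "(\<Union>l\<in>{1..m}. ?A l) \<subseteq> GS q j K m"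
    proof safe
      fix l B r assume l: "l \<in> {1..m}" and B: "B \<in> BS q j K l" and r: "r \<in> GS q j K (m - l)"
      then show "B @ r \<in> GS q j K m"
        using ovalid_append ogood_append unfolding BS_def GS_def by auto
    qed
  qed
  have inj: "inj_on (\<lambda>(B, r). B @ r) (BS q j K l \<times> GS q j K (m - l))" for l
    unfolding inj_on_def BS_def GS_def by auto
  have disj: "?A l1 \<inter> ?A l2 = {}" if "l1 \<in> {1..m}" "l2 \<in> {1..m}" "l1 \<noteq> l2" for l1 l2
  proof (rule ccontr)
    assume "?A l1 \<inter> ?A l2 \<noteq> {}"
    then obtain B1 r1 B2 r2 where e: "B1 @ r1 = B2 @ r2" "B1 \<in> BS q j K l1" "r1 \<in> GS q j K (m - l1)"
      "B2 \<in> BS q j K l2" "r2 \<in> GS q j K (m - l2)" by auto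
    then have "length B1 = length B2" using decomp_unique[OF e(1)] unfolding BS_def GS_def by auto
    then show False using e that unfolding BS_def by auto
  qed
  have "card (GS q j K m) = (\<Sum>l\<in>{1..m}. card (?A l))"
    unfolding eq by (rule card_UN_disjoint) (use disj finite_BS finite_GS in auto)
  also have "\<dots> = (\<Sum>l=1..m. card (BS q j K l) * card (GS q j K (m - l)))"
    by (intro sum.cong refl) (simp add: card_image[OF inj] card_cartesian_product)
  finally show ?thesis .
qed


definition graph_of :: "nat list \<Rightarrow> ograph" where
  "graph_of r = (length r, {e. \<exists>i t. i < t \<and> t < length r \<and> t \<le> i + r!t \<and> e = {Suc i, Suc t}})"

definition PP :: "nat \<Rightarrow> nat \<Rightarrow> (nat \<Rightarrow> nat) \<Rightarrow> ograph set" where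
  "PP q j K = graph_of ` {r. ovalid q r \<and> ogood q j K r}"

lemma edge_graph_of:
  assumes "i < t" "t < length r"
  shows "{Suc i, Suc t} \<in> snd (graph_of r) \<longleftrightarrow> t \<le> i + r!t"
proof
  assume "{Suc i, Suc t} \<in> snd (graph_of r)"
  then obtain i' t' where h: "i' < t'" "t' < length r" "t' \<le> i' + r!t'" "{Suc i, Suc t} = {Suc i', Suc t'}"
    unfolding graph_of_def by auto
  then have "i = i' \<and> t = t'" using assms(1) by (auto simp: doubleton_eq_iff)
  then show "t \<le> i + r!t" using h by auto
next
  assume "t \<le> i + r!t"
  then show "{Suc i, Suc t} \<in> snd (graph_of r)" using assms unfolding graph_of_def by auto
qed

lemma graph_of_inj:
  assumes "ovalid q r1" "ovalid q r2" "length r1 = length r2" "snd (graph_of r1) = snd (graph_of r2)"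
  shows "r1 = r2"
proof (rule nth_equalityI)
  show "length r1 = length r2" by fact
  fix t assume t: "t < length r1"
  {
    fix r1 r2 :: "nat list"
    assume a: "ovalid q r1" "ovalid q r2" "length r1 = length r2" "snd (graph_of r1) = snd (graph_of r2)"
      "t < length r1" "r1!t < r2!t"
    have le: "r2!t \<le> t" using a unfolding ovalid_def by auto
    define i where "i = t - r2!t"
    have it: "i < t" using a(6) le unfolding i_def by auto
    have "t \<le> i + r2!t" unfolding i_def using le by auto
    then have "{Suc i, Suc t} \<in> snd (graph_of r2)" using edge_graph_of[OF it] a by auto
    then have "t \<le> i + r1!t" using edge_graph_of[OF it, of r1] a by auto
    then have False using a(6) le unfolding i_def by auto
  }
  note * = this
  show "r1!t = r2!t"
    using *[OF assms(1-4) t] *[OF assms(2,1) assms(3)[symmetric] assms(4)[symmetric]] t assms(3)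
    by (metis linorder_neqE_nat)
qed

lemma is_ograph_graph_of: "is_ograph (graph_of r)"
  unfolding is_ograph_def
proof
  fix e assume "e \<in> snd (graph_of r)"
  then obtain i t where h: "i < t" "t < length r" "e = {Suc i, Suc t}" unfolding graph_of_def by auto
  have f: "fst (graph_of r) = length r" unfolding graph_of_def by simp
  show "e \<in> {e. \<exists>i j. i \<in> {1..fst (graph_of r)} \<and> j \<in> {1..fst (graph_of r)} \<and> i \<noteq> j \<and> e = {i, j}}"
    unfolding f using h by (intro CollectI exI[of _ "Suc i"] exI[of _ "Suc t"]) auto
qed

lemma level_PP: "level (PP q j K) m = (\<lambda>r. snd (graph_of r)) ` GS q j K m"
proof
  show "level (PP q j K) m \<subseteq> (\<lambda>r. snd (graph_of r)) ` GS q j K m"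
  proof
    fix E assume "E \<in> level (PP q j K) m"
    then obtain r where r: "(m, E) = graph_of r" "ovalid q r" "ogood q j K r"
      unfolding level_def PP_def by auto
    then have "length r = m" "E = snd (graph_of r)" unfolding graph_of_def by auto
    then show "E \<in> (\<lambda>r. snd (graph_of r)) ` GS q j K m" using r unfolding GS_def by auto
  qed
next
  show "(\<lambda>r. snd (graph_of r)) ` GS q j K m \<subseteq> level (PP q j K) m"
  proof
    fix E assume "E \<in> (\<lambda>r. snd (graph_of r)) ` GS q j K m"
    then obtain r where r: "E = snd (graph_of r)" "length r = m" "ovalid q r" "ogood q j K r"
      unfolding GS_def by auto
    then have "graph_of r = (m, E)" unfolding graph_of_def by auto
    then show "E \<in> level (PP q j K) m" using r unfolding level_def PP_def by (auto simp: image_iff)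
  qed
qed

lemma card_level_PP: "card (level (PP q j K) m) = card (GS q j K m)"
  unfolding level_PP
  by (rule card_image) (auto simp: inj_on_def GS_def intro: graph_of_inj)


definition sg :: "nat set \<Rightarrow> nat \<Rightarrow> nat" where
  "sg S i = sorted_list_of_set S ! i - 1"

definition subr :: "nat list \<Rightarrow> nat set \<Rightarrow> nat list" where
  "subr r S = map (\<lambda>b. card {a. a < b \<and> sg S b \<le> sg S a + r!(sg S b)}) [0..<card S]"

lemma sg_props:
  assumes S: "S \<subseteq> {1..m}"
  shows "\<And>i. i < card S \<Longrightarrow> sg S i < m"
    and "\<And>i k. i < k \<Longrightarrow> k < card S \<Longrightarrow> sg S i < sg S k"
    and "\<And>i. i < card S \<Longrightarrow> Suc (sg S i) = sorted_list_of_set S ! i"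
proof -
  have fin: "finite S" using S finite_subset by blast
  have len: "length (sorted_list_of_set S) = card S" by simp
  have mem: "sorted_list_of_set S ! i \<in> S" if "i < card S" for i
    using nth_mem[of i "sorted_list_of_set S"] that fin len by simp
  show "\<And>i. i < card S \<Longrightarrow> Suc (sg S i) = sorted_list_of_set S ! i"
    using mem S unfolding sg_def by fastforce
  show "\<And>i. i < card S \<Longrightarrow> sg S i < m"
    using mem S unfolding sg_def by fastforce
  show "\<And>i k. i < k \<Longrightarrow> k < card S \<Longrightarrow> sg S i < sg S k"
  proof -
    fix i k assume ik: "i < k" "k < card S"
    have "sorted_list_of_set S ! i < sorted_list_of_set S ! k"
      using sorted_wrt_nth_less[OF strict_sorted_list_of_set[of S] ik(1)] ik len by simp
    moreover have "sorted_list_of_set S ! i \<ge> 1" using mem[of i] ik S by fastforce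
    ultimately show "sg S i < sg S k" unfolding sg_def by simp
  qed
qed

lemma upclosed_card:
  assumes up: "\<And>a a'. a \<le> a' \<Longrightarrow> a' < b \<Longrightarrow> P a \<Longrightarrow> P a'" and ab: "a < b"
  shows "P a \<longleftrightarrow> b \<le> a + card {a'. a' < b \<and> P a'}"
proof
  assume "P a"
  then have "{a..<b} \<subseteq> {a'. a' < b \<and> P a'}" using up by auto
  then have "card {a..<b} \<le> card {a'. a' < b \<and> P a'}" by (intro card_mono) auto
  then show "b \<le> a + card {a'. a' < b \<and> P a'}" by simp
next
  assume h: "b \<le> a + card {a'. a' < b \<and> P a'}"
  show "P a"
  proof (rule ccontr)
    assume "\<not> P a"
    then have "{a'. a' < b \<and> P a'} \<subseteq> {Suc a..<b}" using up ab \<open>\<not> P a\<close> by (auto simp: not_less_eq_eq[symmetric])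
    then have "card {a'. a' < b \<and> P a'} \<le> card {Suc a..<b}" by (intro card_mono) auto
    then show False using h ab by simp
  qed
qed

lemma subr_len: "length (subr r S) = card S"
  unfolding subr_def by simp

lemma subr_nth: "b < card S \<Longrightarrow> subr r S ! b = card {a. a < b \<and> sg S b \<le> sg S a + r!(sg S b)}"
  unfolding subr_def by simp

lemma subr_edge:
  assumes S: "S \<subseteq> {1..length r}" and ab: "a < b" "b < card S"
  shows "sg S b \<le> sg S a + r!(sg S b) \<longleftrightarrow> b \<le> a + subr r S ! b"
  unfolding subr_nth[OF ab(2)]
proof (rule upclosed_card[where P="\<lambda>a. sg S b \<le> sg S a + r!(sg S b)", OF _ ab(1)])
  fix a a' assume "a \<le> a'" "a' < b" "sg S b \<le> sg S a + r ! sg S b"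
  moreover have "sg S a \<le> sg S a'" using sg_props(2)[OF S, of a a'] \<open>a \<le> a'\<close> \<open>a' < b\<close> ab
    by (cases "a = a'") auto
  ultimately show "sg S b \<le> sg S a' + r ! sg S b" by simp
qed

lemma subr_le:
  assumes S: "S \<subseteq> {1..length r}" and v: "ovalid q r" and b: "b < card S"
  shows "subr r S ! b \<le> b" "subr r S ! b \<le> r!(sg S b)"
proof -
  let ?X = "{a. a < b \<and> sg S b \<le> sg S a + r!(sg S b)}"
  show "subr r S ! b \<le> b" unfolding subr_nth[OF b]
    using card_mono[of "{..<b}" ?X] by auto
  have gb: "sg S b < length r" using sg_props(1)[OF S b] .
  have R: "r!(sg S b) \<le> sg S b" using v gb unfolding ovalid_def by auto
  have "sg S ` ?X \<subseteq> {sg S b - r!(sg S b)..<sg S b}"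
    using sg_props(2)[OF S] b by fastforce
  moreover have "inj_on (sg S) ?X"
    unfolding inj_on_def using sg_props(2)[OF S] b
    by (metis (no_types, lifting) less_trans linorder_neqE_nat mem_Collect_eq nat_less_le)
  ultimately have "card ?X \<le> card {sg S b - r!(sg S b)..<sg S b}"
    using card_inj_on_le by blast
  then show "subr r S ! b \<le> r!(sg S b)" unfolding subr_nth[OF b] using R by simp
qed

lemma ovalid_subr:
  assumes S: "S \<subseteq> {1..length r}" and v: "ovalid q r"
  shows "ovalid q (subr r S)"
  unfolding ovalid_def subr_len
proof (intro allI impI conjI)
  fix t assume t: "t < card S"
  show "subr r S ! t \<le> t" using subr_le[OF S v t] by simp
  have "r!(sg S t) \<le> q" using v sg_props(1)[OF S t] unfolding ovalid_def by auto
  then show "subr r S ! t \<le> q" using subr_le[OF S v t] by simp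
qed

lemma induced_subr:
  assumes S: "S \<subseteq> {1..length r}"
  shows "induced_osub (graph_of r) S = graph_of (subr r S)"
proof -
  let ?f = "\<lambda>i. sorted_list_of_set S ! (i - 1)"
  have f: "?f (Suc a) = Suc (sg S a)" if "a < card S" for a using sg_props(3)[OF S that] by simp
  have key: "{Suc (sg S a), Suc (sg S b)} \<in> snd (graph_of r) \<longleftrightarrow> {Suc a, Suc b} \<in> snd (graph_of (subr r S))"
    if ab: "a < b" "b < card S" for a b
  proof -
    have "{Suc (sg S a), Suc (sg S b)} \<in> snd (graph_of r) \<longleftrightarrow> sg S b \<le> sg S a + r!(sg S b)"
      by (rule edge_graph_of) (use sg_props[OF S] ab in auto)
    also have "\<dots> \<longleftrightarrow> b \<le> a + subr r S ! b" by (rule subr_edge[OF S ab])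
    also have "\<dots> \<longleftrightarrow> {Suc a, Suc b} \<in> snd (graph_of (subr r S))"
      by (rule edge_graph_of[symmetric]) (use ab subr_len in auto)
    finally show ?thesis .
  qed
  have E: "{e. \<exists>i j. i \<in> {1..card S} \<and> j \<in> {1..card S} \<and> i \<noteq> j \<and> e = {i, j} \<and> {?f i, ?f j} \<in> snd (graph_of r)}
      = snd (graph_of (subr r S))"
  proof (rule set_eqI, rule iffI)
    fix e assume "e \<in> {e. \<exists>i j. i \<in> {1..card S} \<and> j \<in> {1..card S} \<and> i \<noteq> j \<and> e = {i, j} \<and> {?f i, ?f j} \<in> snd (graph_of r)}"
    then obtain i j where h: "i \<in> {1..card S}" "j \<in> {1..card S}" "i \<noteq> j" "e = {i, j}" "{?f i, ?f j} \<in> snd (graph_of r)"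
      by blast
    obtain a b where ab: "a < b" "b < card S" "e = {Suc a, Suc b}" "{Suc (sg S a), Suc (sg S b)} \<in> snd (graph_of r)"
    proof (cases "i < j")
      case True
      show ?thesis using h True f[of "i - 1"] f[of "j - 1"]
        by (intro that[of "i - 1" "j - 1"]) auto
    next
      case False
      then have "j < i" using h by auto
      then show ?thesis using h f[of "i - 1"] f[of "j - 1"]
        by (intro that[of "j - 1" "i - 1"]) (auto simp: insert_commute)
    qed
    then show "e \<in> snd (graph_of (subr r S))" using key by auto
  next
    fix e assume "e \<in> snd (graph_of (subr r S))"
    then obtain a b where ab: "a < b" "b < card S" "e = {Suc a, Suc b}"
      unfolding graph_of_def subr_len by auto
    then have "{Suc (sg S a), Suc (sg S b)} \<in> snd (graph_of r)" using key \<open>e \<in> _\<close> by auto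
    then show "e \<in> {e. \<exists>i j. i \<in> {1..card S} \<and> j \<in> {1..card S} \<and> i \<noteq> j \<and> e = {i, j} \<and> {?f i, ?f j} \<in> snd (graph_of r)}"
      using ab f[of a] f[of b] by (intro CollectI exI[of _ "Suc a"] exI[of _ "Suc b"]) auto
  qed
  show ?thesis unfolding induced_osub_def Let_def E
    by (simp add: graph_of_def subr_len)
qed


lemma sg_mono_le:
  assumes S: "S \<subseteq> {1..m}" and "i \<le> k" "k < card S"
  shows "sg S i \<le> sg S k"
  using sg_props(2)[OF S, of i k] assms by (cases "i = k") auto

lemma ogood_subr:
  assumes S: "S \<subseteq> {1..length r}" and v: "ovalid q r" and g: "ogood q j K r"
  shows "ogood q j K (subr r S)"
  unfolding ogood_def subr_len
proof (intro allI impI)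
  fix a b d assume ab: "a < b" "b \<le> card S" "ocutfree (subr r S) a b" "j \<le> d" "d \<le> q"
  define a0 where "a0 = sg S a"
  define b0 where "b0 = Suc (sg S (b - 1))"
  have ab1: "a \<le> b - 1" "b - 1 < card S" using ab by auto
  have a0b0: "a0 < b0" unfolding a0_def b0_def using sg_mono_le[OF S ab1] by simp
  have b0r: "b0 \<le> length r" unfolding b0_def using sg_props(1)[OF S ab1(2)] by simp
  have cf: "ocutfree r a0 b0" unfolding ocutfree_def
  proof (intro allI impI notI)
    fix c assume c: "a0 < c" "c < b0" "ocut r c"
    define D where "D = {i. i < card S \<and> sg S i < c}"
    have finD: "finite D" unfolding D_def by auto
    have D1: "i < card D" if "i < card S" "sg S i < c" for i
    proof -
      have "{..i} \<subseteq> D" unfolding D_def using sg_mono_le[OF S] that by fastforce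
      then have "card {..i} \<le> card D" using finD by (intro card_mono) auto
      then show ?thesis by simp
    qed
    have D2: "card D \<le> i" if "i < card S" "c \<le> sg S i" for i
    proof -
      have "D \<subseteq> {..<i}" unfolding D_def using sg_mono_le[OF S, of i] that by (auto simp: not_less) (meson le_trans not_le)
      then have "card D \<le> card {..<i}" by (intro card_mono) auto
      then show ?thesis by simp
    qed
    have "a < card D" using D1[of a] c ab unfolding a0_def by auto
    moreover have "card D < b" using D2[OF ab1(2)] c ab ab1 unfolding b0_def by auto
    moreover have "ocut (subr r S) (card D)" unfolding ocut_def subr_len
    proof (intro allI impI)
      fix i assume i: "card D \<le> i" "i < card S"
      have ci: "c \<le> sg S i" using D1[of i] i by (meson not_le)
      have cut: "r!(sg S i) + c \<le> sg S i" using c(3) ci sg_props(1)[OF S i(2)] unfolding ocut_def by auto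
      have "{a. a < i \<and> sg S i \<le> sg S a + r!(sg S i)} \<subseteq> {card D..<i}"
      proof
        fix x assume x: "x \<in> {a. a < i \<and> sg S i \<le> sg S a + r!(sg S i)}"
        then have "c \<le> sg S x" using cut by auto
        then have "card D \<le> x" using D2[of x] x i by auto
        then show "x \<in> {card D..<i}" using x by auto
      qed
      then have "card {a. a < i \<and> sg S i \<le> sg S a + r!(sg S i)} \<le> card {card D..<i}" by (intro card_mono) auto
      then show "subr r S ! i + card D \<le> i" using subr_nth[OF i(2)] i by simp
    qed
    ultimately show False using ab(3) unfolding ocutfree_def by auto
  qed
  have "ostat (subr r S) d a b \<le> ostat r d a0 b0"
    unfolding ostat_def
  proof (rule card_inj_on_le)
    show "inj_on (sg S) {t. a \<le> t \<and> t < b \<and> d \<le> subr r S ! t}"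
      unfolding inj_on_def using sg_props(2)[OF S] ab(2)
      by (metis (no_types, lifting) less_le_trans linorder_neqE_nat mem_Collect_eq nat_less_le)
    show "sg S ` {t. a \<le> t \<and> t < b \<and> d \<le> subr r S ! t} \<subseteq> {t. a0 \<le> t \<and> t < b0 \<and> d \<le> r ! t}"
    proof
      fix x assume "x \<in> sg S ` {t. a \<le> t \<and> t < b \<and> d \<le> subr r S ! t}"
      then obtain t where t: "x = sg S t" "a \<le> t" "t < b" "d \<le> subr r S ! t" by auto
      have "t < card S" using t ab by auto
      have tb: "t \<le> b - 1" using t(3) by linarith
      have "sg S t \<le> sg S (b - 1)" by (rule sg_mono_le[OF S tb ab1(2)])
      then show "x \<in> {t. a0 \<le> t \<and> t < b0 \<and> d \<le> r ! t}"
        using t subr_le(2)[OF S v, of t] sg_mono_le[OF S, of a t] sg_mono_le[OF S, of t "b - 1"] ab ab1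
        unfolding a0_def b0_def by auto
    qed
    show "finite {t. a0 \<le> t \<and> t < b0 \<and> d \<le> r ! t}" by auto
  qed
  also have "\<dots> \<le> K d" using g a0b0 b0r cf ab unfolding ogood_def by auto
  finally show "ostat (subr r S) d a b \<le> K d" .
qed

lemma hereditary_PP: "hereditary (PP q j K)"
  unfolding hereditary_def
proof safe
  fix G assume "G \<in> PP q j K"
  then show "is_ograph G" unfolding PP_def using is_ograph_graph_of by auto
next
  fix G S assume G: "G \<in> PP q j K" and S: "S \<subseteq> {1..fst G}"
  then obtain r where r: "G = graph_of r" "ovalid q r" "ogood q j K r" unfolding PP_def by auto
  have S': "S \<subseteq> {1..length r}" using S r unfolding graph_of_def by simp
  show "induced_osub G S \<in> PP q j K"
    unfolding r(1) induced_subr[OF S'] PP_def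
    using ovalid_subr[OF S' r(2)] ogood_subr[OF S' r(2,3)] by auto
qed


lemma zero_in_GS: "1 \<le> j \<Longrightarrow> replicate m 0 \<in> GS q j K m"
  unfolding GS_def ovalid_def ogood_def ostat_def
proof (intro CollectI conjI allI impI)
  fix a b d assume "1 \<le> j" "a < b" "b \<le> length (replicate m (0::nat))" "j \<le> d"
  then have "\<And>t. t < b \<Longrightarrow> replicate m (0::nat) ! t = 0" by simp
  then have "{t. a \<le> t \<and> t < b \<and> d \<le> replicate m 0 ! t} = {}" using \<open>1 \<le> j\<close> \<open>j \<le> d\<close> by auto
  then show "card {t. a \<le> t \<and> t < b \<and> d \<le> replicate m 0 ! t} \<le> K d" by (metis card.empty le0)
qed auto

lemma card_GS_pos: "1 \<le> j \<Longrightarrow> 1 \<le> card (GS q j K m)"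
  using zero_in_GS[of j m q K] finite_GS[of q j K m]
  by (metis One_nat_def Suc_leI card_gt_0_iff empty_iff)

lemma irred_cutfree: "oirred r \<Longrightarrow> ocutfree r 0 (length r)"
  unfolding oirred_def ocutfree_def by auto

lemma BS_stat:
  assumes "r \<in> BS q j K l" "j \<le> d" "d \<le> q"
  shows "ostat r d 0 l \<le> K d"
proof -
  have "0 < l" using assms unfolding BS_def oirred_def by auto
  then show ?thesis using assms irred_cutfree[of r] unfolding BS_def ogood_def by auto
qed

lemma BS_length_bound:
  assumes r: "r \<in> BS q 1 K l" and q: "1 \<le> q"
  shows "l \<le> q * K 1 + 1"
proof -
  have len: "length r = l" and v: "ovalid q r" and irr: "oirred r" using r unfolding BS_def by auto
  have st: "ostat r 1 0 l \<le> K 1" using BS_stat[OF r _ q] by simp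
  define T where "T = {t. 0 \<le> t \<and> t < l \<and> 1 \<le> r!t}"
  have finT: "finite T" unfolding T_def by auto
  have cover: "{1..<l} \<subseteq> (\<Union>t\<in>T. {t + 1 - r!t..t})"
  proof
    fix c assume c: "c \<in> {1..<l}"
    then have "\<not> ocut r c" using irr len unfolding oirred_def by auto
    then obtain t where t: "c \<le> t" "t < l" "\<not> r!t + c \<le> t" unfolding ocut_def len by auto
    then show "c \<in> (\<Union>t\<in>T. {t + 1 - r!t..t})" unfolding T_def by (intro UN_I[of t]) auto
  qed
  have "l - 1 = card {1..<l}" by simp
  also have "\<dots> \<le> card (\<Union>t\<in>T. {t + 1 - r!t..t})" by (rule card_mono[OF _ cover]) (use finT in auto)
  also have "\<dots> \<le> (\<Sum>t\<in>T. card {t + 1 - r!t..t})" by (rule card_UN_le[OF finT])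
  also have "\<dots> \<le> (\<Sum>t\<in>T. q)"
  proof (rule sum_mono)
    fix t assume "t \<in> T"
    then have "r!t \<le> t" "r!t \<le> q" using v len unfolding T_def ovalid_def by auto
    then show "card {t + 1 - r!t..t} \<le> q" by simp
  qed
  also have "\<dots> = q * card T" by simp
  also have "card T \<le> K 1" using st unfolding ostat_def T_def by simp
  then have "q * card T \<le> q * K 1" by simp
  finally show ?thesis by simp
qed

lemma BS_count_bound:
  assumes jq: "j \<le> q" and q: "1 \<le> q"
  shows "card (BS q j K l) \<le> (l + 1) ^ K q * q ^ l"
proof -
  define T where "T = (\<lambda>r::nat list. {t. t < l \<and> q \<le> r!t})"
  define \<phi> where "\<phi> = (\<lambda>r. (sorted_list_of_set (T r) @ replicate (K q - card (T r)) l,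
                               map (\<lambda>v. if q \<le> v then 0 else v) r))"
  let ?C = "{xs. set xs \<subseteq> {0..l} \<and> length xs = K q} \<times> {ys. set ys \<subseteq> {..<q} \<and> length ys = l}"
  have finTr: "finite (T r)" for r unfolding T_def by auto
  have Tcard: "card (T r) \<le> K q" if "r \<in> BS q j K l" for r
    using BS_stat[OF that jq order_refl] unfolding ostat_def T_def by simp
  have setT: "set (fst (\<phi> r)) \<inter> {..<l} = T r" for r
    unfolding \<phi>_def using finTr[of r] by (auto simp: T_def)
  have "\<phi> ` BS q j K l \<subseteq> ?C"
  proof
    fix x assume "x \<in> \<phi> ` BS q j K l"
    then obtain r where r: "r \<in> BS q j K l" "x = \<phi> r" by auto
    have "set (sorted_list_of_set (T r)) \<subseteq> {0..l}" using finTr[of r] unfolding T_def by auto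
    moreover have "set (map (\<lambda>v. if q \<le> v then 0 else v) r) \<subseteq> {..<q}" using q by auto
    ultimately show "x \<in> ?C" using r Tcard[OF r(1)] finTr[of r] unfolding \<phi>_def BS_def by auto
  qed
  moreover have "inj_on \<phi> (BS q j K l)"
  proof (rule inj_onI)
    fix r1 r2 assume r1: "r1 \<in> BS q j K l" and r2: "r2 \<in> BS q j K l" and e: "\<phi> r1 = \<phi> r2"
    have TT: "T r1 = T r2" using setT[of r1] setT[of r2] e by simp
    have M: "map (\<lambda>v. if q \<le> v then 0 else v) r1 = map (\<lambda>v. if q \<le> v then 0 else v) r2"
      using e unfolding \<phi>_def by simp
    have l1: "length r1 = l" "length r2 = l" using r1 r2 unfolding BS_def by auto
    have b1: "\<forall>t<l. r1!t \<le> q" and b2: "\<forall>t<l. r2!t \<le> q" using r1 r2 unfolding BS_def ovalid_def by auto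
    show "r1 = r2"
    proof (rule nth_equalityI)
      show "length r1 = length r2" using l1 by simp
      fix t assume t: "t < length r1"
      have m: "(if q \<le> r1!t then 0 else r1!t) = (if q \<le> r2!t then 0 else r2!t)"
        using arg_cong[OF M, of "\<lambda>xs. xs!t"] t l1 by simp
      have "q \<le> r1!t \<longleftrightarrow> q \<le> r2!t" using TT t l1 unfolding T_def by blast
      moreover have "r1!t \<le> q" "r2!t \<le> q" using b1 b2 t l1 by auto
      ultimately show "r1!t = r2!t" using m by (auto split: if_splits)
    qed
  qed
  ultimately have "card (BS q j K l) \<le> card ?C"
    by (intro card_inj_on_le) (auto simp: finite_lists_length_eq)
  also have "card ?C = (l + 1) ^ K q * q ^ l"
    by (simp add: card_cartesian_product card_lists_length_eq)
  finally show ?thesis .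
qed

definition wit :: "nat \<Rightarrow> nat \<Rightarrow> nat list" where
  "wit j L = map (\<lambda>t. min t j) [0..<L]"

lemma wit_in:
  assumes "1 \<le> j" "j \<le> q" "1 \<le> L"
  shows "wit j L \<in> BS q (Suc j) K L"
proof -
  have "ovalid q (wit j L)" unfolding ovalid_def wit_def using assms by auto
  moreover have "oirred (wit j L)" unfolding oirred_def wit_def ocut_def using assms
    by (auto simp: min_def)
  moreover have "ogood q (Suc j) K (wit j L)" unfolding ogood_def ostat_def
  proof (intro allI impI)
    fix a b d assume h: "a < b" "b \<le> length (wit j L)" "Suc j \<le> d"
    then have "\<And>t. t < b \<Longrightarrow> wit j L ! t = min t j" unfolding wit_def by simp
    then have "{t. a \<le> t \<and> t < b \<and> d \<le> wit j L ! t} = {}" using h by auto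
    then show "card {t. a \<le> t \<and> t < b \<and> d \<le> wit j L ! t} \<le> K d" by (metis card.empty le0)
  qed
  moreover have "length (wit j L) = L" by (simp add: wit_def)
  ultimately show ?thesis unfolding BS_def by simp
qed

lemma wit_notin:
  assumes "K' j < L - j"
  shows "wit j L \<notin> BS q j K' L"
proof
  assume h: "wit j L \<in> BS q j K' L"
  have jL: "j < L" using assms by simp
  have "wit j L ! j = j" using jL by (simp add: wit_def)
  moreover have "wit j L ! j \<le> q" using h jL unfolding BS_def ovalid_def by auto
  ultimately have "j \<le> q" by simp
  then have "ostat (wit j L) j 0 L \<le> K' j" using BS_stat[OF h] by simp
  moreover have "{t. 0 \<le> t \<and> t < L \<and> j \<le> wit j L ! t} = {j..<L}" unfolding wit_def by auto
  ultimately show False using assms unfolding ostat_def by simp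
qed

lemma BS_sub: "BS q j (K(j:=k)) l \<subseteq> BS q (Suc j) K l"
  unfolding BS_def ogood_def by auto

lemma ostat_le: "ostat r d a b \<le> b - a"
proof -
  have "ostat r d a b \<le> card {a..<b}" unfolding ostat_def by (intro card_mono) auto
  then show ?thesis by simp
qed

lemma BS_eq:
  assumes lk: "l \<le> k"
  shows "BS q j (K(j:=k)) l = BS q (Suc j) K l"
proof (rule equalityI[OF BS_sub subsetI])
  fix x assume x: "x \<in> BS q (Suc j) K l"
  have "ogood q j (K(j:=k)) x" unfolding ogood_def
  proof (intro allI impI)
    fix a b d assume h: "a < b" "b \<le> length x" "ocutfree x a b" "j \<le> d" "d \<le> q"
    show "ostat x d a b \<le> (K(j := k)) d"
    proof (cases "d = j")
      case True then show ?thesis using ostat_le[of x d a b] h lk x unfolding BS_def by auto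
    next
      case False then show ?thesis using h x unfolding BS_def ogood_def by auto
    qed
  qed
  then show "x \<in> BS q j (K(j:=k)) l" using x unfolding BS_def by auto
qed

lemma GS_top: "GS q (Suc q) K m = {r. length r = m \<and> ovalid q r}"
  unfolding GS_def ogood_def by auto

lemma card_GS_top: "card (GS q (Suc q) K (Suc m)) = (min m q + 1) * card (GS q (Suc q) K m)"
proof -
  have eq: "GS q (Suc q) K (Suc m) = (\<lambda>(r, v). r @ [v]) ` (GS q (Suc q) K m \<times> {0..min m q})"
  proof
    show "GS q (Suc q) K (Suc m) \<subseteq> (\<lambda>(r, v). r @ [v]) ` (GS q (Suc q) K m \<times> {0..min m q})"
    proof
      fix r assume "r \<in> GS q (Suc q) K (Suc m)"
      then have r: "length r = Suc m" "ovalid q r" unfolding GS_top by auto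
      then have rr: "r = butlast r @ [last r]" by (metis append_butlast_last_id list.size(3) nat.distinct(1))
      have "r \<noteq> []" using r by auto
      then have "last r = r ! (length r - 1)" by (rule last_conv_nth)
      then have "last r = r ! m" using r by simp
      then have "last r \<le> min m q" using r unfolding ovalid_def by auto
      moreover have "ovalid q (butlast r)" using r unfolding ovalid_def by (auto simp: nth_butlast)
      ultimately show "r \<in> (\<lambda>(r, v). r @ [v]) ` (GS q (Suc q) K m \<times> {0..min m q})"
        unfolding GS_top using r by (intro image_eqI[of _ _ "(butlast r, last r)"]) (auto simp: rr[symmetric])
    qed
  next
    show "(\<lambda>(r, v). r @ [v]) ` (GS q (Suc q) K m \<times> {0..min m q}) \<subseteq> GS q (Suc q) K (Suc m)"
      unfolding GS_top ovalid_def by (auto simp: nth_append)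
  qed
  have inj: "inj_on (\<lambda>(r, v). r @ [v]) (GS q (Suc q) K m \<times> {0..min m q})"
    unfolding inj_on_def by auto
  show ?thesis unfolding eq card_image[OF inj] card_cartesian_product by simp
qed


lemma renewal_growth:
  fixes a b :: "nat \<Rightarrow> real" and x :: real
  assumes a0: "a 0 = 1" and rec: "\<And>m. 1 \<le> m \<Longrightarrow> a m = (\<Sum>l=1..m. b l * a (m - l))"
    and bnn: "\<And>l. 0 \<le> b l" and supp: "\<And>l. L < l \<Longrightarrow> b l = 0"
    and apos: "\<And>m. 1 \<le> a m" and x: "0 < x" and eq: "(\<Sum>l=1..L. b l / x^l) = 1"
  shows "(\<lambda>m. a m powr (1 / real m)) \<longlonglongrightarrow> x"
proof -
  have L1: "1 \<le> L" using eq by (cases L) auto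
  have partial: "(\<Sum>l=1..m. b l / x^l) \<le> 1" for m
  proof -
    have "(\<Sum>l=1..m. b l / x^l) \<le> (\<Sum>l=1..m+L. b l / x^l)"
      by (rule sum_mono2) (use bnn x in auto)
    also have "\<dots> = (\<Sum>l=1..L. b l / x^l)"
      by (rule sum.mono_neutral_right) (use supp in auto)
    finally show ?thesis using eq by simp
  qed
  have pw: "b l * x^(m - l) = x^m * (b l / x^l)" if "l \<le> m" for l m
    using that x by (simp add: power_diff field_simps)
  have upper: "a m \<le> x^m" for m
  proof (induction m rule: less_induct)
    case (less m)
    show ?case
    proof (cases "m = 0")
      case True then show ?thesis using a0 by simp
    next
      case False
      then have "a m = (\<Sum>l=1..m. b l * a (m - l))" using rec by simp
      also have "\<dots> \<le> (\<Sum>l=1..m. b l * x^(m - l))"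
        by (intro sum_mono mult_left_mono less.IH) (use bnn False in auto)
      also have "\<dots> = x^m * (\<Sum>l=1..m. b l / x^l)"
        by (simp add: sum_distrib_left pw)
      also have "\<dots> \<le> x^m * 1" by (intro mult_left_mono partial) (use x in auto)
      finally show ?thesis by simp
    qed
  qed
  define c where "c = Min ((\<lambda>m. a m / x^m) ` {..<L})"
  have pos: "0 < a m / x^m" for m using apos[of m] x by (intro divide_pos_pos) (auto intro: less_le_trans[OF zero_less_one])
  have "0 \<in> {..<L}" using L1 by simp
  then have ne: "{..<L} \<noteq> {}" by blast
  have cpos: "0 < c" unfolding c_def using ne pos by (subst Min_gr_iff) auto
  have lower: "c * x^m \<le> a m" for m
  proof (induction m rule: less_induct)
    case (less m)
    show ?case
    proof (cases "m < L")
      case True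
      then have "c \<le> a m / x^m" unfolding c_def by (intro Min_le) auto
      then show ?thesis using x by (simp add: field_simps)
    next
      case False
      then have m1: "1 \<le> m" using L1 by simp
      have "c * x^m = c * x^m * (\<Sum>l=1..L. b l / x^l)" using eq by simp
      also have "\<dots> = (\<Sum>l=1..L. b l * (c * x^(m - l)))"
        using False by (simp add: sum_distrib_left pw algebra_simps)
      also have "\<dots> \<le> (\<Sum>l=1..L. b l * a (m - l))"
        by (intro sum_mono mult_left_mono less.IH) (use bnn False L1 in auto)
      also have "\<dots> = (\<Sum>l=1..m. b l * a (m - l))"
        by (rule sum.mono_neutral_left) (use False supp in auto)
      also have "\<dots> = a m" using rec[OF m1] by simp
      finally show ?thesis .
    qed
  qed
  have ev1: "\<forall>\<^sub>F m in sequentially. c powr (1 / real m) * x \<le> a m powr (1 / real m)"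
  proof (rule eventually_sequentiallyI[of 1])
    fix m :: nat assume m: "1 \<le> m"
    have "(c * x^m) powr (1 / real m) \<le> a m powr (1 / real m)"
      by (rule powr_mono2) (use lower cpos x in auto)
    moreover have "(c * x^m) powr (1 / real m) = c powr (1 / real m) * x"
      using cpos x m by (simp add: powr_mult powr_realpow[symmetric] powr_powr)
    ultimately show "c powr (1 / real m) * x \<le> a m powr (1 / real m)" by simp
  qed
  have ev2: "\<forall>\<^sub>F m in sequentially. a m powr (1 / real m) \<le> x"
  proof (rule eventually_sequentiallyI[of 1])
    fix m :: nat assume m: "1 \<le> m"
    have "a m powr (1 / real m) \<le> (x^m) powr (1 / real m)"
      by (rule powr_mono2) (use upper apos[of m] in auto)
    moreover have "(x^m) powr (1 / real m) = x"
      using x m by (simp add: powr_realpow[symmetric] powr_powr)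
    ultimately show "a m powr (1 / real m) \<le> x" by simp
  qed
  have lim1: "(\<lambda>m. c powr (1 / real m) * x) \<longlonglongrightarrow> 1 * x"
  proof (rule tendsto_mult[OF _ tendsto_const])
    have "(\<lambda>m. c powr (1 / real m)) \<longlonglongrightarrow> c powr 0"
      by (rule tendsto_powr[OF tendsto_const lim_1_over_n]) (use cpos in auto)
    then show "(\<lambda>m. c powr (1 / real m)) \<longlonglongrightarrow> 1" using cpos by simp
  qed
  show ?thesis
    by (rule tendsto_sandwich[OF ev1 ev2]) (use lim1 in auto)
qed


lemma summable_polygeom:
  fixes \<rho> :: real
  assumes "0 \<le> \<rho>" "\<rho> < 1"
  shows "summable (\<lambda>l. real (l + 1) ^ M * \<rho> ^ l)"
proof (cases "\<rho> = 0")
  case True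
  have "summable (\<lambda>l. if l = 0 then (1::real) else 0)" by (rule summable_single)
  moreover have "(\<lambda>l. real (l + 1) ^ M * \<rho> ^ l) = (\<lambda>l. if l = 0 then (1::real) else 0)"
    using True by (auto simp: fun_eq_iff)
  ultimately show ?thesis by simp
next
  case False
  then have rp: "0 < \<rho>" using assms by simp
  define c where "c = (1 + \<rho>) / 2"
  have c1: "c < 1" "\<rho> < c" using assms unfolding c_def by auto
  define \<theta> where "\<theta> = c / \<rho>"
  have th: "1 < \<theta>" unfolding \<theta>_def using c1 rp by simp
  have lim: "(\<lambda>l. (1 + 1 / real (Suc l)) ^ M) \<longlonglongrightarrow> (1 + 0) ^ M"
    by (intro tendsto_intros LIMSEQ_Suc[OF lim_1_over_n])
  then have "\<forall>\<^sub>F l in sequentially. (1 + 1 / real (Suc l)) ^ M < \<theta>"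
    using th by (intro order_tendstoD(2)) auto
  then obtain N where N: "\<And>l. N \<le> l \<Longrightarrow> (1 + 1 / real (Suc l)) ^ M < \<theta>"
    unfolding eventually_sequentially by blast
  show ?thesis
  proof (rule summable_ratio_test[OF c1(1)])
    fix l assume l: "N \<le> l"
    have eq: "real (Suc l + 1) = real (l + 1) * (1 + 1 / real (Suc l))"
      by (simp add: field_simps)
    have "norm (real (Suc l + 1) ^ M * \<rho> ^ Suc l) = (real (l + 1) ^ M * \<rho> ^ l) * ((1 + 1 / real (Suc l)) ^ M * \<rho>)"
      using rp unfolding eq by (simp add: power_mult_distrib)
    also have "\<dots> \<le> (real (l + 1) ^ M * \<rho> ^ l) * (\<theta> * \<rho>)"
      using N[OF l] rp by (intro mult_left_mono mult_right_mono) auto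
    also have "\<theta> * \<rho> = c" unfolding \<theta>_def using rp by simp
    finally show "norm (real (Suc l + 1) ^ M * \<rho> ^ Suc l) \<le> c * norm (real (l + 1) ^ M * \<rho> ^ l)"
      using rp by (simp add: mult.commute)
  qed
qed

lemma renewal_top:
  fixes a b :: "nat \<Rightarrow> real" and q :: nat
  assumes a0: "a 0 = 1" and rec: "\<And>m. 1 \<le> m \<Longrightarrow> a m = (\<Sum>l=1..m. b l * a (m - l))"
    and bnn: "\<And>l. 0 \<le> b l" and b0: "b 0 = 0"
    and step: "\<And>m. a (Suc m) = real (min m q + 1) * a m"
  shows "(\<lambda>l. b l * (1 / real (Suc q)) ^ l) sums 1"
proof -
  define n where "n = real (Suc q)"
  have n1: "1 \<le> n" unfolding n_def by simp
  define \<alpha> where "\<alpha> m = a m / n^m" for m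
  define \<beta> where "\<beta> l = b l * (1 / n)^l" for l
  have \<beta>nn: "0 \<le> \<beta> l" for l unfolding \<beta>_def using bnn n1 by simp
  have \<beta>0: "\<beta> 0 = 0" unfolding \<beta>_def using b0 by simp
  have apos: "1 \<le> a m" for m
  proof (induction m)
    case 0 then show ?case using a0 by simp
  next
    case (Suc m)
    have "0 \<le> real (min m q) * a m" using Suc by simp
    then have h: "a m \<le> real (min m q + 1) * a m" by (simp add: algebra_simps)
    show ?case using Suc.IH step[of m] h by linarith
  qed
  have \<alpha>step: "\<alpha> (Suc m) = \<alpha> m * (real (min m q + 1) / n)" for m
    unfolding \<alpha>_def step using n1 by (simp add: field_simps)
  have \<alpha>dec: "\<alpha> (Suc m) \<le> \<alpha> m" for m
  proof -
    have "real (min m q + 1) / n \<le> 1" unfolding n_def by simp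
    moreover have "0 \<le> \<alpha> m" unfolding \<alpha>_def using apos[of m] n1 by simp
    ultimately have "\<alpha> m * (real (min m q + 1) / n) \<le> \<alpha> m * 1" by (intro mult_left_mono) auto
    then show ?thesis unfolding \<alpha>step by simp
  qed
  have \<alpha>const: "\<alpha> (Suc m) = \<alpha> m" if "q \<le> m" for m
    unfolding \<alpha>step using that unfolding n_def by simp
  define c where "c = \<alpha> q"
  have cpos: "0 < c" unfolding c_def \<alpha>_def using apos[of q] n1 by simp
  have \<alpha>le1: "\<alpha> m \<le> 1" for m
    by (induction m) (use \<alpha>dec a0 in \<open>auto simp: \<alpha>_def intro: order.trans\<close>)
  have \<alpha>c: "\<alpha> m = c" if "q \<le> m" for m
    using that unfolding c_def by (induction m rule: dec_induct) (use \<alpha>const in auto)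
  have \<alpha>gec: "c \<le> \<alpha> m" for m
  proof (cases "q \<le> m")
    case True then show ?thesis using \<alpha>c by simp
  next
    case False
    have "\<alpha> q \<le> \<alpha> m" if "m \<le> q" for q
      using that by (induction q rule: dec_induct) (use \<alpha>dec in \<open>auto intro: order.trans\<close>)
    then show ?thesis using False unfolding c_def by simp
  qed
  have \<alpha>rec: "\<alpha> m = (\<Sum>l=1..m. \<beta> l * \<alpha> (m - l))" if "1 \<le> m" for m
  proof -
    have "\<alpha> m = (\<Sum>l=1..m. b l * a (m - l)) / n^m" unfolding \<alpha>_def using rec[OF that] by simp
    also have "\<dots> = (\<Sum>l=1..m. \<beta> l * \<alpha> (m - l))"
      unfolding sum_divide_distrib
      by (intro sum.cong refl) (use n1 in \<open>auto simp: \<alpha>_def \<beta>_def power_diff field_simps power_one_over\<close>)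
    finally show ?thesis .
  qed
  have P: "(\<Sum>l=1..L. \<beta> l) \<le> 1" for L
  proof (cases "L = 0")
    case True then show ?thesis by simp
  next
    case False
    have "c * (\<Sum>l=1..L. \<beta> l) = (\<Sum>l=1..L. \<beta> l * \<alpha> (L + q - l))"
      unfolding sum_distrib_left by (intro sum.cong refl) (auto simp: \<alpha>c)
    also have "\<dots> \<le> (\<Sum>l=1..L+q. \<beta> l * \<alpha> (L + q - l))"
      by (rule sum_mono2) (use \<beta>nn \<alpha>gec cpos in \<open>auto intro: mult_nonneg_nonneg order.trans[OF less_imp_le[OF cpos]]\<close>)
    also have "\<dots> = \<alpha> (L + q)" using \<alpha>rec[of "L + q"] False by simp
    also have "\<dots> = c" using \<alpha>c by simp
    finally show ?thesis using cpos by simp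
  qed
  have PL: "(\<Sum>l<Suc L. \<beta> l) = (\<Sum>l=1..L. \<beta> l)" for L
  proof -
    have "{..<Suc L} = insert 0 {1..L}" by auto
    then show ?thesis using \<beta>0 by simp
  qed
  have sm: "summable \<beta>"
  proof (rule summableI_nonneg_bounded[OF \<beta>nn])
    fix L show "(\<Sum>l<L. \<beta> l) \<le> 1"
      using P[of "L - 1"] PL[of "L - 1"] by (cases L) auto
  qed
  define S where "S = suminf \<beta>"
  have S1: "S \<le> 1" unfolding S_def
    by (rule suminf_le_const[OF sm]) (use P PL in \<open>metis (no_types) Suc_pred' bot_nat_0.not_eq_extremum lessThan_0 sum.empty zero_le_one\<close>)
  have PS: "(\<Sum>l=1..N. \<beta> l) \<le> S" for N
    unfolding S_def PL[symmetric] by (rule sum_le_suminf[OF sm]) (use \<beta>nn in auto)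
  have PS2: "(\<Sum>l=N+1..N+q. \<beta> l) \<le> S - (\<Sum>l=1..N. \<beta> l)" for N
  proof -
    have "(\<Sum>l=1..N+q. \<beta> l) = (\<Sum>l=1..N. \<beta> l) + (\<Sum>l=N+1..N+q. \<beta> l)"
      by (rule sum.ub_add_nat) simp
    then show ?thesis using PS[of "N + q"] by simp
  qed
  have bound: "c \<le> c * (\<Sum>l=1..N. \<beta> l) + (S - (\<Sum>l=1..N. \<beta> l))" if N: "1 \<le> N" for N
  proof -
    have "c = \<alpha> (N + q)" using \<alpha>c by simp
    also have "\<dots> = (\<Sum>l=1..N+q. \<beta> l * \<alpha> (N + q - l))" using \<alpha>rec[of "N + q"] N by simp
    also have "\<dots> = (\<Sum>l=1..N. \<beta> l * \<alpha> (N + q - l)) + (\<Sum>l=N+1..N+q. \<beta> l * \<alpha> (N + q - l))"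
      by (rule sum.ub_add_nat) (use N in simp)
    also have "(\<Sum>l=1..N. \<beta> l * \<alpha> (N + q - l)) = c * (\<Sum>l=1..N. \<beta> l)"
      unfolding sum_distrib_left by (intro sum.cong refl) (auto simp: \<alpha>c)
    also have "(\<Sum>l=N+1..N+q. \<beta> l * \<alpha> (N + q - l)) \<le> (\<Sum>l=N+1..N+q. \<beta> l)"
      by (intro sum_mono) (use \<beta>nn \<alpha>le1 in \<open>auto intro: mult_left_le\<close>)
    finally show ?thesis using PS2[of N] by simp
  qed
  have limP: "(\<lambda>N. \<Sum>l=1..N. \<beta> l) \<longlonglongrightarrow> S"
  proof -
    have "(\<lambda>N. \<Sum>l<N. \<beta> l) \<longlonglongrightarrow> S" unfolding S_def using sm by (simp add: summable_LIMSEQ)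
    then have "(\<lambda>N. \<Sum>l<Suc N. \<beta> l) \<longlonglongrightarrow> S" by (rule LIMSEQ_Suc)
    then show ?thesis unfolding PL .
  qed
  have "(\<lambda>N. c * (\<Sum>l=1..N. \<beta> l) + (S - (\<Sum>l=1..N. \<beta> l))) \<longlonglongrightarrow> c * S + (S - S)"
    by (intro tendsto_intros limP)
  then have "c \<le> c * S + (S - S)"
    by (rule LIMSEQ_le_const) (use bound in blast)
  then have "1 \<le> S" using cpos by simp
  then have "S = 1" using S1 by simp
  then have "\<beta> sums 1" using sm unfolding S_def by (simp add: summable_sums_iff)
  then show ?thesis unfolding \<beta>_def n_def .
qed


definition bb :: "nat \<Rightarrow> nat \<Rightarrow> (nat \<Rightarrow> nat) \<Rightarrow> nat \<Rightarrow> real" where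
  "bb q j K l = real (card (BS q j K l))"

definition oroot :: "nat \<Rightarrow> nat \<Rightarrow> (nat \<Rightarrow> nat) \<Rightarrow> real \<Rightarrow> bool" where
  "oroot q j K x \<longleftrightarrow> (\<lambda>l. bb q j K l * (1 / x) ^ l) sums 1"

lemma GS_rec_real:
  "1 \<le> m \<Longrightarrow> real (card (GS q j K m)) = (\<Sum>l=1..m. bb q j K l * real (card (GS q j K (m - l))))"
  unfolding bb_def using card_GS_rec[of m q j K] by (simp add: of_nat_sum)

lemma bb0: "bb q j K 0 = 0"
  unfolding bb_def BS_0 by simp

lemma base_case:
  assumes q: "1 \<le> q" and r: "oroot q 1 K x" and xq: "real q < x"
  shows "x \<in> growth_constants"
proof -
  have x0: "0 < x" using q xq by simp
  define L where "L = q * K 1 + 1"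
  have supp: "bb q 1 K l = 0" if "L < l" for l
  proof -
    have "BS q 1 K l = {}" using BS_length_bound[OF _ q] that unfolding L_def by fastforce
    then show ?thesis unfolding bb_def by simp
  qed
  have "suminf (\<lambda>l. bb q 1 K l * (1 / x) ^ l) = (\<Sum>l\<in>{..<Suc L}. bb q 1 K l * (1 / x) ^ l)"
    by (rule suminf_finite) (use supp in auto)
  also have "\<dots> = (\<Sum>l=1..L. bb q 1 K l / x ^ l)"
  proof -
    have "{..<Suc L} = insert 0 {1..L}" by auto
    then show ?thesis using bb0 by (simp add: power_one_over)
  qed
  finally have eq: "(\<Sum>l=1..L. bb q 1 K l / x ^ l) = 1" using r unfolding oroot_def by (simp add: sums_iff)
  have lim: "(\<lambda>m. real (card (GS q 1 K m)) powr (1 / real m)) \<longlonglongrightarrow> x"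
  proof (rule renewal_growth[where b="bb q 1 K" and L=L])
    show "real (card (GS q 1 K 0)) = 1" unfolding GS_0 by simp
    show "\<And>m. 1 \<le> m \<Longrightarrow> real (card (GS q 1 K m)) = (\<Sum>l=1..m. bb q 1 K l * real (card (GS q 1 K (m - l))))"
      by (rule GS_rec_real)
    show "\<And>l. 0 \<le> bb q 1 K l" unfolding bb_def by simp
    show "\<And>l. L < l \<Longrightarrow> bb q 1 K l = 0" by (rule supp)
    show "\<And>m. 1 \<le> real (card (GS q 1 K m))" using card_GS_pos[of 1 q K] by simp
  qed (use x0 eq in auto)
  have "hereditary (PP q 1 K)" by (rule hereditary_PP)
  moreover have "(\<lambda>m. real (card (level (PP q 1 K) m)) powr (1 / real m)) \<longlonglongrightarrow> x"
    unfolding card_level_PP by (rule lim)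
  ultimately show ?thesis unfolding growth_constants_def by blast
qed

lemma top_case:
  assumes q: "1 \<le> q"
  shows "oroot q (Suc q) K (real (Suc q))"
  unfolding oroot_def
proof (rule renewal_top[where a="\<lambda>m. real (card (GS q (Suc q) K m))"])
  show "real (card (GS q (Suc q) K 0)) = 1" unfolding GS_0 by simp
  show "\<And>m. 1 \<le> m \<Longrightarrow> real (card (GS q (Suc q) K m)) = (\<Sum>l=1..m. bb q (Suc q) K l * real (card (GS q (Suc q) K (m - l))))"
    by (rule GS_rec_real)
  show "\<And>l. 0 \<le> bb q (Suc q) K l" unfolding bb_def by simp
  show "bb q (Suc q) K 0 = 0" by (rule bb0)
  show "\<And>m. real (card (GS q (Suc q) K (Suc m))) = real (min m q + 1) * real (card (GS q (Suc q) K m))"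
    unfolding card_GS_top by (simp add: algebra_simps)
qed

lemma summable_bb:
  assumes jq: "j \<le> q" and q: "1 \<le> q" and y: "real q < y"
  shows "summable (\<lambda>l. bb q j K l * (1 / y) ^ l)"
proof (rule summable_comparison_test'[OF summable_polygeom[of "real q / y" "K q"]])
  have y0: "0 < y" using q y by simp
  show "0 \<le> real q / y" "real q / y < 1" using y0 y by auto
  fix l :: nat
  have "bb q j K l \<le> real ((l + 1) ^ K q * q ^ l)" unfolding bb_def using BS_count_bound[OF jq q, of K l]
    by linarith
  then have "bb q j K l * (1 / y) ^ l \<le> real ((l + 1) ^ K q * q ^ l) * (1 / y) ^ l"
    using y0 by (intro mult_right_mono) auto
  also have "\<dots> = real (l + 1) ^ K q * (real q / y) ^ l"
    by (simp add: power_divide field_simps)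
  finally show "norm (bb q j K l * (1 / y) ^ l) \<le> real (l + 1) ^ K q * (real q / y) ^ l"
    using y0 unfolding bb_def by simp
qed

lemma isCont_bb:
  assumes jq: "j \<le> q" and q: "1 \<le> q" and y: "real q < y"
  shows "isCont (\<lambda>y. \<Sum>l. bb q j K l * (1 / y) ^ l) y"
proof -
  define y' where "y' = (real q + y) / 2"
  have y': "real q < y'" "y' < y" using y unfolding y'_def by auto
  have y0: "0 < y'" using y' q by simp
  have s: "summable (\<lambda>l. bb q j K l * (1 / y') ^ l)" by (rule summable_bb[OF jq q y'(1)])
  have "norm (1 / y) < norm (1 / y')" using y' y0 by (simp add: frac_less2)
  then have c: "isCont (\<lambda>z. \<Sum>l. bb q j K l * z ^ l) (1 / y)" by (rule isCont_powser[OF s])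
  have "isCont (\<lambda>y::real. 1 / y) y" using y' y0 by (intro continuous_intros) auto
  from isCont_o2[where f="\<lambda>y::real. 1 / y" and g="\<lambda>z. \<Sum>l. bb q j K l * z ^ l", OF this c]
  show ?thesis .
qed


lemma approx_step:
  assumes j: "1 \<le> j" "j \<le> q" and r: "oroot q (Suc j) K x" and xq: "real q < x" and e: "0 < \<epsilon>"
  shows "\<exists>k y. oroot q j (K(j:=k)) y \<and> real q < y \<and> x - \<epsilon> < y \<and> y < x"
proof -
  have q: "1 \<le> q" using j by simp
  have x0: "0 < x" using q xq by simp
  let ?bB = "bb q (Suc j) K"
  define y0 where "y0 = (max (x - \<epsilon>) (real q) + x) / 2"
  have y0: "max (x - \<epsilon>) (real q) < y0" "y0 < x" unfolding y0_def using e xq by auto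
  have y00: "0 < y0" using y0 q by simp
  have sB: "(\<lambda>l. ?bB l * (1 / x) ^ l) sums 1" using r unfolding oroot_def .
  have termge: "(x / y0) * (?bB l * (1 / x) ^ l) \<le> ?bB l * (1 / y0) ^ l" for l
  proof (cases "l = 0")
    case True then show ?thesis using bb0 by simp
  next
    case False
    have xy: "1 \<le> x / y0" using y0 y00 by simp
    have "x / y0 \<le> (x / y0) ^ l" using xy False by (simp add: power_increasing[of 1 l, simplified])
    then have "(x / y0) * (1 / x) ^ l \<le> (x / y0) ^ l * (1 / x) ^ l"
      using x0 by (intro mult_right_mono) auto
    also have "\<dots> = (1 / y0) ^ l" using x0 by (simp add: power_divide field_simps)
    finally show ?thesis using bb_def[of q "Suc j" K l]
      by (metis (no_types, lifting) mult.left_commute mult_left_mono of_nat_0_le_iff)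
  qed
  have "(\<lambda>L. (x / y0) * (\<Sum>l<L. ?bB l * (1 / x) ^ l)) \<longlonglongrightarrow> (x / y0) * 1"
    by (intro tendsto_intros) (use sB in \<open>simp add: sums_def\<close>)
  moreover have "1 < (x / y0) * 1" using y0 y00 by simp
  ultimately have "\<forall>\<^sub>F L in sequentially. 1 < (x / y0) * (\<Sum>l<L. ?bB l * (1 / x) ^ l)"
    by (rule order_tendstoD(1))
  then obtain L where L: "1 < (x / y0) * (\<Sum>l<L. ?bB l * (1 / x) ^ l)"
    by (meson eventually_sequentially order_refl)
  define k where "k = L"
  let ?bs = "bb q j (K(j:=k))"
  have eqb: "?bs l = ?bB l" if "l < L" for l unfolding bb_def k_def using BS_eq[of l L q j K] that by simp
  have gt: "1 < (\<Sum>l<L. ?bs l * (1 / y0) ^ l)"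
  proof -
    have "(x / y0) * (\<Sum>l<L. ?bB l * (1 / x) ^ l) \<le> (\<Sum>l<L. ?bB l * (1 / y0) ^ l)"
      unfolding sum_distrib_left by (intro sum_mono termge)
    also have "\<dots> = (\<Sum>l<L. ?bs l * (1 / y0) ^ l)" using eqb by simp
    finally show ?thesis using L by simp
  qed
  define h where "h y = (\<Sum>l. ?bs l * (1 / y) ^ l)" for y
  have sums_s: "summable (\<lambda>l. ?bs l * (1 / y) ^ l)" if "real q < y" for y
    by (rule summable_bb[OF _ q that]) (use j in simp)
  have h0: "1 < h y0"
  proof -
    have "(\<Sum>l<L. ?bs l * (1 / y0) ^ l) \<le> h y0" unfolding h_def
      by (rule sum_le_suminf[OF sums_s]) (use y0 y00 bb_def in auto)
    then show ?thesis using gt by simp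
  qed
  define L' where "L' = k + j + 1"
  have wB: "wit j L' \<in> BS q (Suc j) K L'" by (rule wit_in) (use j in \<open>auto simp: L'_def\<close>)
  have ws: "wit j L' \<notin> BS q j (K(j:=k)) L'" by (rule wit_notin) (simp add: L'_def)
  have ltc: "card (BS q j (K(j:=k)) L') < card (BS q (Suc j) K L')"
    by (rule psubset_card_mono[OF finite_BS]) (use BS_sub wB ws in blast)
  have ind: "?bs l + (if l = L' then 1 else 0) \<le> ?bB l" for l
  proof (cases "l = L'")
    case True then show ?thesis using ltc unfolding bb_def by simp
  next
    case False then show ?thesis using card_mono[OF finite_BS BS_sub[of q j K k l]] unfolding bb_def by simp
  qed
  have hx: "h x < 1"
  proof -
    have s1: "(\<lambda>l. ?bs l * (1 / x) ^ l) sums h x" unfolding h_def using sums_s[OF xq] by (simp add: summable_sums)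
    have "(\<lambda>l. (if l = L' then 1 else 0) * (1 / x) ^ l) = (\<lambda>r. if r = L' then (1 / x) ^ r else 0)"
      by (auto simp: fun_eq_iff)
    then have s2: "(\<lambda>l. (if l = L' then 1 else 0) * (1 / x) ^ l) sums ((1 / x) ^ L')"
      using sums_single[of L' "\<lambda>l. (1 / x) ^ l"] by simp
    have "(\<lambda>l. ?bs l * (1 / x) ^ l + (if l = L' then 1 else 0) * (1 / x) ^ l) sums (h x + (1 / x) ^ L')"
      by (rule sums_add[OF s1 s2])
    moreover have le: "\<And>l. ?bs l * (1 / x) ^ l + (if l = L' then 1 else 0) * (1 / x) ^ l \<le> ?bB l * (1 / x) ^ l"
      using ind x0 by (simp add: distrib_right[symmetric] mult_right_mono)
    ultimately have "h x + (1 / x) ^ L' \<le> 1" using sums_le[OF le _ sB] by blast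
    moreover have "0 < (1 / x) ^ L'" using x0 by simp
    ultimately show ?thesis by simp
  qed
  have cont: "continuous_on {y0..x} h"
  proof (rule continuous_at_imp_continuous_on, rule ballI)
    fix y assume "y \<in> {y0..x}"
    then have "real q < y" using y0 by auto
    then have "isCont (\<lambda>y. \<Sum>l. bb q j (K(j:=k)) l * (1 / y) ^ l) y"
      using isCont_bb[OF j(2) q, of y "K(j:=k)"] by simp
    then show "isCont h y" unfolding h_def .
  qed
  obtain y where y: "y0 \<le> y" "y \<le> x" "h y = 1"
    using IVT2'[of h x 1 y0, OF _ _ _ cont] hx h0 y0 by auto
  have yx: "y < x" using y hx by (cases "y = x") auto
  have yq: "real q < y" using y y0 by auto
  have "oroot q j (K(j:=k)) y" unfolding oroot_def
    using sums_s[OF yq] y(3) unfolding h_def by (simp add: summable_sums_iff)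
  then show ?thesis using yq yx y y0 by (intro exI[of _ k] exI[of _ y]) auto
qed

lemma acc_belowI: "(\<And>\<epsilon>. 0 < \<epsilon> \<Longrightarrow> S \<inter> {c - \<epsilon><..<c} \<noteq> {}) \<Longrightarrow> c \<in> acc_below S"
  unfolding acc_below_def by blast

lemma chain:
  assumes q: "1 \<le> q"
  shows "1 \<le> j \<Longrightarrow> j \<le> Suc q \<Longrightarrow> oroot q j K x \<Longrightarrow> real q < x \<Longrightarrow> x \<in> (acc_below ^^ (j - 1)) growth_constants"
proof (induction j arbitrary: K x)
  case 0 then show ?case by simp
next
  case (Suc j)
  show ?case
  proof (cases "j = 0")
    case True then show ?thesis using base_case[OF q] Suc by simp
  next
    case False
    have j: "1 \<le> j" "j \<le> q" using False Suc by auto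
    have "x \<in> acc_below ((acc_below ^^ (j - 1)) growth_constants)"
    proof (rule acc_belowI)
      fix \<epsilon> :: real assume e: "0 < \<epsilon>"
      obtain k y where ky: "oroot q j (K(j:=k)) y" "real q < y" "x - \<epsilon> < y" "y < x"
        using approx_step[OF j Suc.prems(3,4) e] by blast
      have "y \<in> (acc_below ^^ (j - 1)) growth_constants" using Suc.IH[OF j(1) _ ky(1,2)] j by simp
      then show "(acc_below ^^ (j - 1)) growth_constants \<inter> {x - \<epsilon><..<x} \<noteq> {}" using ky by auto
    qed
    moreover have "(acc_below ^^ (Suc j - 1)) = acc_below \<circ> (acc_below ^^ (j - 1))"
      using False by (metis Suc_pred' diff_Suc_1 funpow.simps(2) not_gr_zero)
    ultimately show ?thesis by simp
  qed
qed

theorem corollary32: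
  fixes n :: nat
  assumes "n \<ge> 2"
  shows "real n \<in> (acc_below ^^ (n - 1)) growth_constants"
proof -
  define q where "q = n - 1"
  have q: "1 \<le> q" and n: "n = Suc q" using assms unfolding q_def by auto
  have "oroot q (Suc q) (\<lambda>_. 0) (real (Suc q))" by (rule top_case[OF q])
  from chain[OF q _ _ this] have "real (Suc q) \<in> (acc_below ^^ (Suc q - 1)) growth_constants"
    by simp
  then show ?thesis unfolding n by simp
qed


end
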